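(* Let \[ C=\begin{pmatrix}O&-I\\O&O\end{pmatrix},\qquad D=\begin{pmatrix}O&O\\O&2I\end{pmatrix}, \] and let $K$ be a symmetric non-negative definite $2n\times2n$ matrix. Then there is a solution $N(t)$, $t>0$, of the matrix Riccati equation \[ \dot N=NC+C^TN+NDN-K \] such that $\lim_{t\to0}N(t)^{-1}=0$, $N(t)\le0$ and $\dot N(t)\ge0$ for $t>0$.
   Context: $I$ and $O$ are the $n\times n$ identity and zero matrices; matrices are $2\times2$ block matrices of $n\times n$ blocks; inequalities between symmetric matrices are in the sense of quadratic forms. *)

theory Defs
  imports "HOL-Analysis.Analysis"
begin

text \<open>2n x 2n matrices are indexed by the sum type 'n + 'n (first block = Inl, second = Inr).
  Inequalities between matrices are in the sense of quadratic forms.\<close>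

definition mat_nonneg :: "real^'m^'m \<Rightarrow> bool" where
  "mat_nonneg X \<longleftrightarrow> (\<forall>x. 0 \<le> x \<bullet> (X *v x))"

definition mat_nonpos :: "real^'m^'m \<Rightarrow> bool" where
  "mat_nonpos X \<longleftrightarrow> (\<forall>x. x \<bullet> (X *v x) \<le> 0)"

definition Cmat :: "real^('n::finite + 'n)^('n + 'n)" where
  "Cmat = (\<chi> i j. case (i, j) of (Inl a, Inr b) \<Rightarrow> (if a = b then -1 else 0) | _ \<Rightarrow> 0)"

definition Dmat :: "real^('n::finite + 'n)^('n + 'n)" where
  "Dmat = (\<chi> i j. case (i, j) of (Inr a, Inr b) \<Rightarrow> (if a = b then 2 else 0) | _ \<Rightarrow> 0)"

end

theory Submission imports Defs begin

typedef (overloaded) 'a endo = "UNIV :: ('a::euclidean_space \<Rightarrow>\<^sub>L 'a) set" by auto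

instantiation endo :: (euclidean_space) real_normed_vector
begin
definition "0 = Abs_endo 0"
definition "a + b = Abs_endo (Rep_endo a + Rep_endo b)"
definition "a - b = Abs_endo (Rep_endo a - Rep_endo b)"
definition "- a = Abs_endo (- Rep_endo a)"
definition "scaleR r a = Abs_endo (r *\<^sub>R Rep_endo a)"
definition "norm a = norm (Rep_endo a)"
definition "sgn (a::'a endo) = Abs_endo (sgn (Rep_endo a))"
definition "dist (a::'a endo) b = dist (Rep_endo a) (Rep_endo b)"
definition "uniformity = (INF e\<in>{0<..}. principal {(x::'a endo, y). dist x y < e})"
definition "open (U::'a endo set) = (\<forall>x\<in>U. \<forall>\<^sub>F (x', y) in uniformity. x' = x \<longrightarrow> y \<in> U)"
instance
proof
  fix a b c :: "'a endo" and r s :: real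
  show "a + b + c = a + (b + c)" by (simp add: plus_endo_def Abs_endo_inverse add.assoc)
  show "a + b = b + a" by (simp add: plus_endo_def add.commute)
  show "0 + a = a" by (simp add: plus_endo_def zero_endo_def Abs_endo_inverse Rep_endo_inverse)
  show "- a + a = 0" by (simp add: plus_endo_def zero_endo_def uminus_endo_def Abs_endo_inverse)
  show "a - b = a + - b" by (simp add: plus_endo_def minus_endo_def uminus_endo_def Abs_endo_inverse)
  show "r *\<^sub>R (a + b) = r *\<^sub>R a + r *\<^sub>R b" by (simp add: plus_endo_def scaleR_endo_def Abs_endo_inverse scaleR_add_right)
  show "(r + s) *\<^sub>R a = r *\<^sub>R a + s *\<^sub>R a" by (simp add: plus_endo_def scaleR_endo_def Abs_endo_inverse scaleR_add_left)
  show "r *\<^sub>R s *\<^sub>R a = (r * s) *\<^sub>R a" by (simp add: scaleR_endo_def Abs_endo_inverse)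
  show "1 *\<^sub>R a = a" by (simp add: scaleR_endo_def Rep_endo_inverse)
  show "sgn a = inverse (norm a) *\<^sub>R a" by (simp add: sgn_endo_def scaleR_endo_def norm_endo_def sgn_div_norm)
  show "dist a b = norm (a - b)" by (simp add: dist_endo_def norm_endo_def minus_endo_def Abs_endo_inverse dist_norm)
  show "norm a = 0 \<longleftrightarrow> a = 0" by (metis Abs_endo_inverse Rep_endo_inverse UNIV_I norm_eq_zero norm_endo_def zero_endo_def)
  show "norm (a + b) \<le> norm a + norm b" by (simp add: plus_endo_def norm_endo_def Abs_endo_inverse norm_triangle_ineq)
  show "norm (r *\<^sub>R a) = \<bar>r\<bar> * norm a" by (simp add: scaleR_endo_def norm_endo_def Abs_endo_inverse)
qed (simp_all add: uniformity_endo_def open_endo_def)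
end

instantiation endo :: (euclidean_space) real_normed_algebra_1
begin
definition "a * b = Abs_endo (Rep_endo a o\<^sub>L Rep_endo b)"
definition "1 = Abs_endo id_blinfun"
instance
proof
  fix a b c :: "'a endo" and r :: real
  show "a * b * c = a * (b * c)" by (simp add: times_endo_def Abs_endo_inverse) (rule arg_cong[where f=Abs_endo], rule blinfun_eqI, simp)
  show "(a + b) * c = a * c + b * c" by (simp add: times_endo_def plus_endo_def Abs_endo_inverse) (rule arg_cong[where f=Abs_endo], rule blinfun_eqI, simp add: blinfun.bilinear_simps)
  show "a * (b + c) = a * b + a * c" by (simp add: times_endo_def plus_endo_def Abs_endo_inverse) (rule arg_cong[where f=Abs_endo], rule blinfun_eqI, simp add: blinfun.bilinear_simps)
  show "1 * a = a"
  proof -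
    have "id_blinfun o\<^sub>L Rep_endo a = Rep_endo a" by (rule blinfun_eqI) simp
    thus ?thesis by (simp add: times_endo_def one_endo_def Abs_endo_inverse Rep_endo_inverse)
  qed
  show "a * 1 = a"
  proof -
    have "Rep_endo a o\<^sub>L id_blinfun = Rep_endo a" by (rule blinfun_eqI) simp
    thus ?thesis by (simp add: times_endo_def one_endo_def Abs_endo_inverse Rep_endo_inverse)
  qed
  show "(0::'a endo) \<noteq> 1"
  proof
    assume "(0::'a endo) = 1"
    hence "norm (0::'a endo) = norm (1::'a endo)" by simp
    thus False by (simp add: one_endo_def norm_endo_def Abs_endo_inverse zero_endo_def)
  qed
  show "r *\<^sub>R a * b = r *\<^sub>R (a * b)" by (simp add: times_endo_def scaleR_endo_def Abs_endo_inverse) (rule arg_cong[where f=Abs_endo], rule blinfun_eqI, simp add: blinfun.bilinear_simps)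
  show "a * r *\<^sub>R b = r *\<^sub>R (a * b)" by (simp add: times_endo_def scaleR_endo_def Abs_endo_inverse) (rule arg_cong[where f=Abs_endo], rule blinfun_eqI, simp add: blinfun.bilinear_simps)
  show "norm (a * b) \<le> norm a * norm b" by (simp add: times_endo_def norm_endo_def Abs_endo_inverse norm_blinfun_compose)
  show "norm (1::'a endo) = 1" by (simp add: one_endo_def norm_endo_def Abs_endo_inverse)
qed
end

lemma norm_Rep_endo: "norm (Rep_endo a) = norm a" by (simp add: norm_endo_def)
lemma Rep_endo_diff: "Rep_endo (a - b) = Rep_endo a - Rep_endo b"
  by (simp add: minus_endo_def Abs_endo_inverse)

instance endo :: (euclidean_space) banach
proof
  fix X :: "nat \<Rightarrow> 'a endo" assume "Cauchy X"
  hence "Cauchy (\<lambda>n. Rep_endo (X n))"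
    unfolding Cauchy_def dist_norm by (metis Rep_endo_diff norm_Rep_endo)
  then obtain L where L: "(\<lambda>n. Rep_endo (X n)) \<longlonglongrightarrow> L" using convergent_eq_Cauchy[symmetric] convergent_def by metis
  have "X \<longlonglongrightarrow> Abs_endo L"
    using L unfolding LIMSEQ_def dist_norm
    by (metis Abs_endo_inverse Rep_endo_diff UNIV_I norm_Rep_endo)
  thus "convergent X" by (auto simp: convergent_def)
qed


type_synonym 'n M2 = "real^('n + 'n)^('n + 'n)"

lemma Rep_endo_mult_apply: "blinfun_apply (Rep_endo (a * b)) z = blinfun_apply (Rep_endo a) (blinfun_apply (Rep_endo b) z)"
  by (simp add: times_endo_def Abs_endo_inverse)

lemma Rep_endo_one: "Rep_endo 1 = id_blinfun"
  by (simp add: one_endo_def Abs_endo_inverse)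

lemma ode_exists:
  fixes f :: "'a::euclidean_space \<Rightarrow> 'a" assumes "linear f"
  shows "\<exists>z. z 0 = z0 \<and> (\<forall>t. (z has_vector_derivative f (z t)) (at t))"
proof -
  have bl: "bounded_linear f" using assms linear_conv_bounded_linear by auto
  define A where "A = Abs_endo (Blinfun f)"
  define z where "z t = blinfun_apply (Rep_endo (exp (t *\<^sub>R A))) z0" for t
  have ev: "bounded_linear (\<lambda>E::'a endo. blinfun_apply (Rep_endo E) z0)"
  proof (rule bounded_linear_intro[where K="norm z0"])
    fix a b :: "'a endo" and r :: real
    show "blinfun_apply (Rep_endo (a + b)) z0 = blinfun_apply (Rep_endo a) z0 + blinfun_apply (Rep_endo b) z0"
      by (simp add: plus_endo_def Abs_endo_inverse blinfun.add_left)
    show "blinfun_apply (Rep_endo (r *\<^sub>R a)) z0 = r *\<^sub>R blinfun_apply (Rep_endo a) z0"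
      by (simp add: scaleR_endo_def Abs_endo_inverse blinfun.scaleR_left)
    show "norm (blinfun_apply (Rep_endo a) z0) \<le> norm a * norm z0"
      by (simp add: norm_endo_def norm_blinfun)
  qed
  have "z 0 = z0" by (simp add: z_def Rep_endo_one)
  moreover have "(z has_vector_derivative f (z t)) (at t)" for t
  proof -
    have "((\<lambda>t. exp (t *\<^sub>R A)) has_vector_derivative A * exp (t *\<^sub>R A)) (at t)"
      by (rule exp_scaleR_has_vector_derivative_left)
    from bounded_linear.has_vector_derivative[OF ev this]
    show ?thesis unfolding z_def
      by (simp add: Rep_endo_mult_apply A_def Abs_endo_inverse bounded_linear_Blinfun_apply[OF bl])
  qed
  ultimately show ?thesis by blast
qed

lemma matrix_add_rdistrib': "((B + C) ** A) = (B ** A) + (C ** A)"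
  by (vector matrix_matrix_mult_def sum.distrib[symmetric] field_simps)

lemma bb_mm: "bounded_bilinear ((**) :: real^'n^'m \<Rightarrow> real^'p^'n \<Rightarrow> real^'p^'m)"
  unfolding bilinear_conv_bounded_bilinear[symmetric]
  by (simp add: bilinear_def linear_iff matrix_add_ldistrib matrix_add_rdistrib' scalar_matrix_assoc matrix_scalar_ac)

lemma bb_mv: "bounded_bilinear ((*v) :: real^'n^'m \<Rightarrow> real^'n \<Rightarrow> real^'m)"
  unfolding bilinear_conv_bounded_bilinear[symmetric]
  by (simp add: bilinear_def linear_iff algebra_simps matrix_scaleR_vector_ac scaleR_matrix_vector_assoc)

lemma tendsto_det:
  fixes A :: "'b \<Rightarrow> real^'n^'n"
  assumes "(A \<longlongrightarrow> A0) F"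
  shows "((\<lambda>s. det (A s)) \<longlongrightarrow> det A0) F"
  unfolding det_def by (intro tendsto_intros assms)

lemma matrix_inv_cramer:
  fixes A :: "real^'n^'n"
  assumes d: "det A \<noteq> 0"
  shows "matrix_inv A = (\<chi> k j. det (\<chi> i l. if l = k then axis j 1 $ i else A $ i $ l) / det A)"
proof -
  have inv: "invertible A" using d invertible_det_nz by blast
  then have AB: "A ** matrix_inv A = mat 1"
    unfolding invertible_def matrix_inv_def by (rule someI2_ex) auto
  show ?thesis
  proof (subst vec_eq_iff, intro allI, subst vec_eq_iff, intro allI)
    fix k j
    have "A *v (matrix_inv A *v axis j 1) = axis j 1"
      by (simp add: matrix_vector_mul_assoc AB)
    hence "matrix_inv A *v axis j 1 = (\<chi> k. det (\<chi> i l. if l = k then axis j 1 $ i else A $ i $ l) / det A)"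
      using cramer[OF d] by blast
    hence "(matrix_inv A *v axis j 1) $ k = det (\<chi> i l. if l = k then axis j 1 $ i else A $ i $ l) / det A"
      by simp
    thus "matrix_inv A $ k $ j = (\<chi> k j. det (\<chi> i l. if l = k then axis j 1 $ i else A $ i $ l) / det A) $ k $ j"
      by (simp add: matrix_vector_mult_basis column_def)
  qed
qed

lemma tendsto_matrix_inv:
  fixes A :: "'b \<Rightarrow> real^'n^'n"
  assumes lim: "(A \<longlongrightarrow> A0) F" and d: "det A0 \<noteq> 0"
  shows "((\<lambda>s. matrix_inv (A s)) \<longlongrightarrow> matrix_inv A0) F"
proof -
  have ev: "\<forall>\<^sub>F s in F. det (A s) \<noteq> 0"
    using tendsto_imp_eventually_ne[OF tendsto_det[OF lim] d] .
  have lim2: "((\<lambda>s. (\<chi> k j. det (\<chi> i l. if l = k then axis j 1 $ i else A s $ i $ l) / det (A s)) :: real^'n^'n)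
     \<longlongrightarrow> (\<chi> k j. det (\<chi> i l. if l = k then axis j 1 $ i else A0 $ i $ l) / det A0)) F"
    apply (intro tendsto_vec_lambda tendsto_divide tendsto_det d lim)
    subgoal for k j i l by (cases "l = k") (auto intro!: tendsto_intros lim)
    done
  show ?thesis
    apply (subst matrix_inv_cramer[OF d])
    apply (rule Lim_transform_eventually[OF lim2])
    using ev by eventually_elim (simp add: matrix_inv_cramer)
qed

lemma vderiv_iff_quot:
  fixes f :: "real \<Rightarrow> 'a::real_normed_vector"
  shows "(f has_vector_derivative D) (at t) \<longleftrightarrow> ((\<lambda>y. (f y - f t) /\<^sub>R (y - t)) \<longlongrightarrow> D) (at t)"
proof -
  have eq: "\<forall>\<^sub>F y in at t. norm (f y - f t - (y - t) *\<^sub>R D) / norm (y - t) = norm ((f y - f t) /\<^sub>R (y - t) - D)"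
    unfolding eventually_at_filter
  proof (intro always_eventually allI impI)
    fix y assume "y \<noteq> t"
    hence "(f y - f t) /\<^sub>R (y - t) - D = inverse (y - t) *\<^sub>R (f y - f t - (y - t) *\<^sub>R D)"
      by (simp add: scaleR_diff_right)
    hence "norm ((f y - f t) /\<^sub>R (y - t) - D) = inverse \<bar>y - t\<bar> * norm (f y - f t - (y - t) *\<^sub>R D)"
      by simp
    thus "norm (f y - f t - (y - t) *\<^sub>R D) / norm (y - t) = norm ((f y - f t) /\<^sub>R (y - t) - D)"
      by (simp add: divide_inverse_commute)
  qed
  have "(f has_vector_derivative D) (at t) \<longleftrightarrow> ((\<lambda>y. norm (f y - f t - (y - t) *\<^sub>R D) / norm (y - t)) \<longlongrightarrow> 0) (at t)"
    unfolding has_vector_derivative_def has_derivative_iff_norm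
    by (auto intro: bounded_linear_scaleR_left)
  also have "\<dots> \<longleftrightarrow> ((\<lambda>y. norm ((f y - f t) /\<^sub>R (y - t) - D)) \<longlongrightarrow> 0) (at t)"
    using eq by (rule tendsto_cong)
  also have "\<dots> \<longleftrightarrow> ((\<lambda>y. (f y - f t) /\<^sub>R (y - t)) \<longlongrightarrow> D) (at t)"
    by (simp add: tendsto_norm_zero_iff Lim_null[symmetric])
  finally show ?thesis .
qed

lemma matrix_inv_props:
  fixes A :: "real^'n^'n"
  assumes "invertible A"
  shows "A ** matrix_inv A = mat 1" "matrix_inv A ** A = mat 1"
  using assms unfolding invertible_def matrix_inv_def by (metis (mono_tags, lifting) someI_ex)+

lemma inv_apply:
  fixes A :: "real^'n^'n"
  assumes "invertible A"
  shows "A *v (matrix_inv A *v z) = z" "matrix_inv A *v (A *v z) = z"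
  by (simp_all add: matrix_vector_mul_assoc matrix_inv_props[OF assms])

lemma vderiv_matrix_inv:
  fixes X :: "real \<Rightarrow> real^'n^'n"
  assumes d: "(X has_vector_derivative X') (at t)" and inv: "det (X t) \<noteq> 0"
  shows "((\<lambda>s. matrix_inv (X s)) has_vector_derivative - (matrix_inv (X t) ** X' ** matrix_inv (X t))) (at t)"
proof -
  have cont: "(X \<longlongrightarrow> X t) (at t)"
    using has_vector_derivative_continuous[OF d] by (simp add: continuous_at)
  have Xi: "((\<lambda>s. matrix_inv (X s)) \<longlongrightarrow> matrix_inv (X t)) (at t)"
    by (rule tendsto_matrix_inv[OF cont inv])
  have q: "((\<lambda>y. (X y - X t) /\<^sub>R (y - t)) \<longlongrightarrow> X') (at t)"
    using d vderiv_iff_quot by blast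
  have ev: "\<forall>\<^sub>F s in at t. det (X s) \<noteq> 0"
    using tendsto_imp_eventually_ne[OF tendsto_det[OF cont] inv] .
  have lim: "((\<lambda>y. - (matrix_inv (X y) ** ((X y - X t) /\<^sub>R (y - t) ** matrix_inv (X t))))
      \<longlongrightarrow> - (matrix_inv (X t) ** (X' ** matrix_inv (X t)))) (at t)"
    by (intro tendsto_minus bounded_bilinear.tendsto[OF bb_mm] Xi q tendsto_const)
  have "((\<lambda>y. (matrix_inv (X y) - matrix_inv (X t)) /\<^sub>R (y - t))
      \<longlongrightarrow> - (matrix_inv (X t) ** (X' ** matrix_inv (X t)))) (at t)"
  proof (rule Lim_transform_eventually[OF lim])
    show "\<forall>\<^sub>F y in at t. - (matrix_inv (X y) ** ((X y - X t) /\<^sub>R (y - t) ** matrix_inv (X t))) =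
        (matrix_inv (X y) - matrix_inv (X t)) /\<^sub>R (y - t)"
      using ev
    proof eventually_elim
      case (elim y)
      have iy: "invertible (X y)" and it: "invertible (X t)" using elim inv invertible_det_nz by blast+
      have e1: "matrix_inv (X y) ** ((X y - X t) ** matrix_inv (X t)) = matrix_inv (X t) - matrix_inv (X y)"
        unfolding matrix_eq
        by (simp add: matrix_vector_mul_assoc[symmetric] matrix_vector_mult_diff_rdistrib
             matrix_vector_mult_diff_distrib inv_apply[OF iy] inv_apply[OF it])
      have e2: "(X y - X t) /\<^sub>R (y - t) ** matrix_inv (X t) = inverse (y - t) *\<^sub>R ((X y - X t) ** matrix_inv (X t))"
        by (simp add: scalar_matrix_assoc)
      have e3: "matrix_inv (X y) ** (c *\<^sub>R M) = c *\<^sub>R (matrix_inv (X y) ** M)" for c and M :: "real^'n^'n"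
        by (simp add: matrix_scalar_ac scalar_matrix_assoc)
      have "- (matrix_inv (X y) ** ((X y - X t) /\<^sub>R (y - t) ** matrix_inv (X t))) =
          - (inverse (y - t) *\<^sub>R (matrix_inv (X t) - matrix_inv (X y)))"
        unfolding e2 e3 e1 ..
      also have "\<dots> = (matrix_inv (X y) - matrix_inv (X t)) /\<^sub>R (y - t)"
        by (simp add: algebra_simps)
      finally show ?case .
    qed
  qed
  thus ?thesis
    by (simp add: vderiv_iff_quot matrix_mul_assoc)
qed
lemma sum_UNIV_plus: "sum g (UNIV :: ('a::finite + 'b::finite) set) = sum (g \<circ> Inl) UNIV + sum (g \<circ> Inr) UNIV"
  by (subst UNIV_Plus_UNIV[symmetric], rule sum.Plus) auto

lemma D_apply: "(Dmat *v y) $ i = (case i of Inl a \<Rightarrow> 0 | Inr a \<Rightarrow> 2 * y $ Inr a)"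
  by (cases i) (simp_all add: Dmat_def matrix_vector_mult_def sum_UNIV_plus o_def if_distrib if_distribR cong: if_cong)

lemma CT_apply: "(transpose Cmat *v y) $ i = (case i of Inl a \<Rightarrow> 0 | Inr a \<Rightarrow> - y $ Inl a)"
  by (cases i) (simp_all add: Cmat_def transpose_def matrix_vector_mult_def sum_UNIV_plus o_def if_distrib if_distribR cong: if_cong)

lemma D_sym: "transpose Dmat = Dmat"
  by (auto simp: Dmat_def transpose_def vec_eq_iff split: sum.splits)

lemma D_quad: "y \<bullet> (Dmat *v y) = 2 * (\<Sum>a\<in>UNIV. (y $ Inr a)^2)"
  by (simp add: inner_vec_def sum_UNIV_plus D_apply o_def sum_distrib_left power2_eq_square mult_ac)

lemma D_quad_nonneg: "0 \<le> y \<bullet> (Dmat *v y)"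
  by (simp add: D_quad sum_nonneg)

lemma D_quad_zero: "y \<bullet> (Dmat *v y) = 0 \<Longrightarrow> y $ Inr a = 0"
  using sum_nonneg_eq_0_iff[of UNIV "\<lambda>a. (y $ Inr a)^2"] by (simp add: D_quad)

lemma transpose_inner: "(transpose A *v u) \<bullet> w = u \<bullet> ((A::real^'n^'m) *v w)"
  by (simp add: dot_lmul_matrix)

lemma sym_inner: "transpose A = A \<Longrightarrow> ((A::real^'n^'n) *v u) \<bullet> w = u \<bullet> (A *v w)"
  by (metis transpose_inner)

lemma psd_zero:
  fixes K :: "real^'n^'n"
  assumes sym: "transpose K = K" and nn: "mat_nonneg K" and z: "x \<bullet> (K *v x) = 0"
  shows "K *v x = 0"
proof -
  define w where "w = K *v x"
  define a where "a = w \<bullet> (K *v x)"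
  define b where "b = w \<bullet> (K *v w)"
  have b0: "0 \<le> b" using nn by (simp add: mat_nonneg_def b_def)
  have "0 \<le> (x + r *\<^sub>R w) \<bullet> (K *v (x + r *\<^sub>R w))" for r using nn by (simp add: mat_nonneg_def)
  also have "(x + r *\<^sub>R w) \<bullet> (K *v (x + r *\<^sub>R w)) = 2 * r * a + r^2 * b" for r
    using z sym_inner[OF sym, of w x]
    by (simp add: algebra_simps inner_add_left inner_add_right a_def b_def power2_eq_square inner_commute)
  finally have ineq: "0 \<le> 2 * r * a + r^2 * b" for r .
  have "a = 0"
  proof (rule ccontr)
    assume "a \<noteq> 0"
    define r where "r = - a / (b + 1)"
    have rr: "(b + 1) * r = - a" using b0 by (simp add: r_def)
    have "(b + 1)^2 * (2 * r * a + r^2 * b) = 2 * a * (b + 1) * ((b + 1) * r) + b * ((b + 1) * r)^2"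
      by (simp add: power2_eq_square algebra_simps)
    also have "\<dots> = - (a^2 * (b + 2))" unfolding rr by (simp add: power2_eq_square algebra_simps)
    also have "\<dots> < 0" using \<open>a \<noteq> 0\<close> b0 by simp
    finally have "(b + 1)^2 * (2 * r * a + r^2 * b) < 0" .
    hence "2 * r * a + r^2 * b < 0" using b0 by (simp add: mult_less_0_iff)
    thus False using ineq[of r] by simp
  qed
  thus ?thesis by (simp add: a_def w_def)
qed

lemma mv_uminus: "(- A) *v v = - ((A::real^'n^'m) *v v)"
  by (simp add: matrix_vector_mult_def vec_eq_iff sum_negf)

lemma mm_uminus: "(- A) ** B = - ((A::real^'n^'m) ** B)" "B ** (- A) = - (B ** A)"
  by (simp_all add: matrix_matrix_mult_def vec_eq_iff sum_negf)

lemma mv_uminus_right: "A *v (- u) = - ((A::real^'n^'m) *v u)"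
  by (simp add: matrix_vector_mult_def vec_eq_iff sum_negf)

lemma transpose_inner2: "u \<bullet> (transpose A *v w) = ((A::real^'n^'m) *v u) \<bullet> w"
  by (metis inner_commute transpose_inner)

lemma sym_deriv_zero:
  fixes K :: "real^('n::finite + 'n)^('n + 'n)"
  assumes "transpose K = K"
  shows "yv \<bullet> (- (Cmat *v xw) - Dmat *v yw) + (- (K *v xv) + transpose Cmat *v yv) \<bullet> xw
     - (xv \<bullet> (- (K *v xw) + transpose Cmat *v yw) + (- (Cmat *v xv) - Dmat *v yv) \<bullet> yw) = 0"
  by (simp add: inner_diff_left inner_diff_right inner_add_left inner_add_right
      transpose_inner transpose_inner2 sym_inner[OF assms] sym_inner[OF D_sym] del: transpose_matrix_vector)

lemma g_deriv:
  fixes K :: "real^('n::finite + 'n)^('n + 'n)"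
  shows "x \<bullet> (- (K *v x) + transpose Cmat *v y) + (- (Cmat *v x) - Dmat *v y) \<bullet> y
     = - (x \<bullet> (K *v x) + y \<bullet> (Dmat *v y))"
  by (simp add: inner_diff_left inner_diff_right inner_add_left inner_add_right
      transpose_inner transpose_inner2 sym_inner[OF D_sym] del: transpose_matrix_vector)

lemma DCT_inner: "u \<bullet> (Dmat *v (transpose Cmat *v w)) = (Cmat *v (Dmat *v u)) \<bullet> w"
  by (metis sym_inner D_sym transpose_inner2)

lemma q_deriv_zero:
  fixes K :: "real^('n::finite + 'n)^('n + 'n)"
  assumes Ks: "transpose K = K"
    and x'_def: "x' = - (Cmat *v x) - Dmat *v y" and y'_def: "y' = - (K *v x) + transpose Cmat *v y"
  shows "- (x \<bullet> (K *v x') + x' \<bullet> (K *v x)) + 2 * ((Cmat *v x) \<bullet> y' + (Cmat *v x') \<bullet> y)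
     + (y \<bullet> (Dmat *v y') + y' \<bullet> (Dmat *v y)) = 0"
proof -
  have "- (x \<bullet> (K *v x') + x' \<bullet> (K *v x)) + 2 * ((Cmat *v x) \<bullet> y' + (Cmat *v x') \<bullet> y)
     + (y \<bullet> (Dmat *v y') + y' \<bullet> (Dmat *v y)) =
     (K *v x) \<bullet> (Cmat *v x) + (K *v x) \<bullet> (Dmat *v y) + (Cmat *v x) \<bullet> (K *v x) + (Dmat *v y) \<bullet> (K *v x)
     - 2 * ((Cmat *v x) \<bullet> (K *v x)) + 2 * ((Cmat *v (Cmat *v x)) \<bullet> y)
     - 2 * ((Cmat *v (Cmat *v x)) \<bullet> y) - 2 * ((Cmat *v (Dmat *v y)) \<bullet> y)
     - (Dmat *v y) \<bullet> (K *v x) + (Cmat *v (Dmat *v y)) \<bullet> y - (K *v x) \<bullet> (Dmat *v y) + (Cmat *v (Dmat *v y)) \<bullet> y"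
    unfolding x'_def y'_def
    by (simp add: inner_diff_left inner_diff_right inner_add_left inner_add_right mv_uminus_right
      matrix_vector_mult_diff_distrib matrix_vector_right_distrib
      transpose_inner transpose_inner2 sym_inner[OF Ks] sym_inner[OF D_sym] DCT_inner algebra_simps del: transpose_matrix_vector)
      (simp add: inner_commute)
  also have "\<dots> = 0" by (simp add: inner_commute)
  finally show ?thesis .
qed

lemma matrix_inv_unique:
  fixes A B :: "real^'n^'n"
  assumes "A ** B = mat 1"
  shows "matrix_inv A = B"
proof -
  have "invertible A" using assms invertible_right_inverse by blast
  hence "matrix_inv A = matrix_inv A ** (A ** B)" by (simp add: assms)
  also have "\<dots> = B" by (simp add: matrix_mul_assoc matrix_inv_props[OF \<open>invertible A\<close>])
  finally show ?thesis .
qed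

lemma invertible_matrix_inv:
  fixes A :: "real^'n^'n"
  assumes "invertible A" shows "invertible (matrix_inv A)"
  using matrix_inv_props[OF assms] unfolding invertible_def by blast

lemma riccati_id:
  fixes X Y C D K :: "real^'n^'n"
  assumes it: "invertible X"
  shows "Y ** (- (matrix_inv X ** (- (C ** X) - D ** Y) ** matrix_inv X))
       + (- (K ** X) + transpose C ** Y) ** matrix_inv X
       = (Y ** matrix_inv X) ** C + transpose C ** (Y ** matrix_inv X) + (Y ** matrix_inv X) ** D ** (Y ** matrix_inv X) - K"
proof -
  have "Y *v (- (matrix_inv X *v (- (C *v (X *v (matrix_inv X *v u))) - D *v (Y *v (matrix_inv X *v u)))))
       + (- (K *v (X *v (matrix_inv X *v u))) + transpose C *v (Y *v (matrix_inv X *v u)))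
     = Y *v (matrix_inv X *v (C *v u)) + transpose C *v (Y *v (matrix_inv X *v u))
       + Y *v (matrix_inv X *v (D *v (Y *v (matrix_inv X *v u)))) - K *v u" (is "?L u = ?R u") for u
    by (simp only: inv_apply[OF it] mv_uminus_right matrix_vector_mult_diff_distrib minus_diff_eq diff_minus_eq_add)
      (simp add: algebra_simps matrix_vector_right_distrib)
  note key = this
  show ?thesis
    unfolding matrix_eq
    by (simp only: matrix_vector_mul_assoc[symmetric] matrix_vector_mult_add_rdistrib
          matrix_vector_mult_diff_rdistrib mv_uminus key simp_thms)

qed

theorem lemma3p1:
  fixes K :: "real^('n::finite + 'n)^('n + 'n)"
  assumes "transpose K = K" and "mat_nonneg K"
  shows "\<exists>N :: real \<Rightarrow> real^('n + 'n)^('n + 'n).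
           (\<forall>t>0. (N has_vector_derivative
               (N t ** Cmat + transpose Cmat ** N t + N t ** Dmat ** N t - K)) (at t))
         \<and> (\<forall>\<^sub>F t in at_right 0. invertible (N t))
         \<and> ((\<lambda>t. matrix_inv (N t)) \<longlongrightarrow> 0) (at_right 0)
         \<and> (\<forall>t>0. mat_nonpos (N t))
         \<and> (\<forall>t>0. mat_nonneg (vector_derivative N (at t)))"
proof -
  note Ksym = assms(1) and Knn = assms(2)
  define f :: "'n M2 \<times> 'n M2 \<Rightarrow> 'n M2 \<times> 'n M2"
    where "f = (\<lambda>(P, Q). (- (Cmat ** P) - Dmat ** Q, - (K ** P) + transpose Cmat ** Q))"
  have "linear f"
    unfolding linear_iff f_def
    by (auto simp: matrix_add_ldistrib scalar_matrix_assoc matrix_scalar_ac algebra_simps)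
  from ode_exists[OF this, of "(0, mat 1)"] obtain z where
    z0: "z 0 = (0, mat 1)" and zd: "\<And>t. (z has_vector_derivative f (z t)) (at t)" by blast
  define X where "X = (\<lambda>s. fst (z s))"
  define Y where "Y = (\<lambda>s. snd (z s))"
  have X0: "X 0 = 0" and Y0: "Y 0 = mat 1" using z0 by (simp_all add: X_def Y_def)
  have Xd: "(X has_vector_derivative (- (Cmat ** X s) - Dmat ** Y s)) (at s)" for s
    using bounded_linear.has_vector_derivative[OF bounded_linear_fst zd[of s]]
    by (simp add: X_def Y_def f_def case_prod_beta o_def)
  have Yd: "(Y has_vector_derivative (- (K ** X s) + transpose Cmat ** Y s)) (at s)" for s
    using bounded_linear.has_vector_derivative[OF bounded_linear_snd zd[of s]]
    by (simp add: X_def Y_def f_def case_prod_beta o_def)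
  have xd: "((\<lambda>s. X s *v v) has_vector_derivative (- (Cmat *v (X s *v v)) - Dmat *v (Y s *v v))) (at s)" for s v
    using bounded_bilinear.has_vector_derivative[OF bb_mv Xd[of s] has_vector_derivative_const[of v]]
    by (simp add: matrix_vector_mult_diff_rdistrib matrix_vector_mul_assoc mv_uminus)
  have yd: "((\<lambda>s. Y s *v v) has_vector_derivative (- (K *v (X s *v v)) + transpose Cmat *v (Y s *v v))) (at s)" for s v
    using bounded_bilinear.has_vector_derivative[OF bb_mv Yd[of s] has_vector_derivative_const[of v]]
    by (simp add: matrix_vector_mult_add_rdistrib matrix_vector_mult_diff_rdistrib matrix_vector_mul_assoc mv_uminus)
  have Kd: "((\<lambda>s. A *v (X s *v v)) has_vector_derivative A *v (- (Cmat *v (X s *v v)) - Dmat *v (Y s *v v))) (at s)" for s v A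
    using bounded_bilinear.has_vector_derivative[OF bb_mv has_vector_derivative_const[of A] xd[of v s]]
    by simp
  have Kyd: "((\<lambda>s. A *v (Y s *v v)) has_vector_derivative A *v (- (K *v (X s *v v)) + transpose Cmat *v (Y s *v v))) (at s)" for s v A
    using bounded_bilinear.has_vector_derivative[OF bb_mv has_vector_derivative_const[of A] yd[of v s]]
    by simp
  note ipd = bounded_bilinear.has_vector_derivative[OF bounded_bilinear_inner]
  have F1: "(Y s *v v) \<bullet> (X s *v w) = (X s *v v) \<bullet> (Y s *v w)" for s v w
  proof -
    define h where "h s = (Y s *v v) \<bullet> (X s *v w) - (X s *v v) \<bullet> (Y s *v w)" for s
    have "(h has_real_derivative 0) (at s)" for s
    proof -
      have "(h has_vector_derivative
        ((Y s *v v) \<bullet> (- (Cmat *v (X s *v w)) - Dmat *v (Y s *v w)) + (- (K *v (X s *v v)) + transpose Cmat *v (Y s *v v)) \<bullet> (X s *v w)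
       - ((X s *v v) \<bullet> (- (K *v (X s *v w)) + transpose Cmat *v (Y s *v w)) + (- (Cmat *v (X s *v v)) - Dmat *v (Y s *v v)) \<bullet> (Y s *v w)))) (at s)"
        unfolding h_def[abs_def] by (intro has_vector_derivative_diff ipd xd yd)
      thus ?thesis
        by (simp only: sym_deriv_zero[OF Ksym] has_real_derivative_iff_has_vector_derivative)
    qed
    hence "h s = h 0" by (intro DERIV_isconst_all) auto
    thus ?thesis by (simp add: h_def X0 Y0)
  qed
  have F2: "- ((X s *v v) \<bullet> (K *v (X s *v v))) + 2 * ((Cmat *v (X s *v v)) \<bullet> (Y s *v v))
      + (Y s *v v) \<bullet> (Dmat *v (Y s *v v)) = v \<bullet> (Dmat *v v)" for s v
  proof -
    define h where "h s = - ((X s *v v) \<bullet> (K *v (X s *v v))) + 2 * ((Cmat *v (X s *v v)) \<bullet> (Y s *v v))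
      + (Y s *v v) \<bullet> (Dmat *v (Y s *v v))" for s
    have "(h has_real_derivative 0) (at s)" for s
    proof -
      let ?x = "X s *v v" and ?y = "Y s *v v"
      let ?x' = "- (Cmat *v ?x) - Dmat *v ?y" and ?y' = "- (K *v ?x) + transpose Cmat *v ?y"
      have "(h has_vector_derivative
        (- (?x \<bullet> (K *v ?x') + ?x' \<bullet> (K *v ?x)) + 2 * ((Cmat *v ?x) \<bullet> ?y' + (Cmat *v ?x') \<bullet> ?y)
          + (?y \<bullet> (Dmat *v ?y') + ?y' \<bullet> (Dmat *v ?y)))) (at s)"
        unfolding h_def[abs_def]
        by (intro has_vector_derivative_add has_vector_derivative_minus has_vector_derivative_mult_right
             ipd xd yd Kd Kyd)
      thus ?thesis
        by (simp only: q_deriv_zero[OF Ksym refl refl] has_real_derivative_iff_has_vector_derivative)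
    qed
    hence "h s = h 0" by (intro DERIV_isconst_all) auto
    thus ?thesis by (simp add: h_def X0 Y0)
  qed
  have gd: "((\<lambda>s. (X s *v v) \<bullet> (Y s *v v)) has_real_derivative
       - ((X s *v v) \<bullet> (K *v (X s *v v)) + (Y s *v v) \<bullet> (Dmat *v (Y s *v v)))) (at s)" for s v
  proof -
    have "((\<lambda>s. (X s *v v) \<bullet> (Y s *v v)) has_vector_derivative
       ((X s *v v) \<bullet> (- (K *v (X s *v v)) + transpose Cmat *v (Y s *v v)) + (- (Cmat *v (X s *v v)) - Dmat *v (Y s *v v)) \<bullet> (Y s *v v))) (at s)"
      by (intro ipd xd yd)
    thus ?thesis by (simp only: g_deriv has_real_derivative_iff_has_vector_derivative)
  qed
  have gmono: "(X a *v v) \<bullet> (Y a *v v) \<ge> (X s *v v) \<bullet> (Y s *v v)" if "a \<le> s" for a s v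
      using that
      apply (rule DERIV_nonpos_imp_nonincreasing)
      subgoal for x
      proof -
        have "0 \<le> (X x *v v) \<bullet> (K *v (X x *v v))" using Knn by (simp add: mat_nonneg_def)
        moreover have "0 \<le> (Y x *v v) \<bullet> (Dmat *v (Y x *v v))" by (rule D_quad_nonneg)
        ultimately show ?thesis using gd[of v x] by (intro exI[of _ "- ((X x *v v) \<bullet> (K *v (X x *v v)) + (Y x *v v) \<bullet> (Dmat *v (Y x *v v)))"]) auto
      qed
      done
  have gnonpos: "(X s *v v) \<bullet> (Y s *v v) \<le> 0" if "0 \<le> s" for s v
    using gmono[OF that, of v] by (simp add: X0)
  have Xinv: "invertible (X t)" if t0: "0 < t" for t
  proof -
    have kern: "w = 0" if Xw: "X t *v w = 0" for w
    proof -
      define g where "g s = (X s *v w) \<bullet> (Y s *v w)" for s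
      have gz: "g s = 0" if "0 \<le> s" "s \<le> t" for s
        using gmono[OF that(1), of w] gmono[OF that(2), of w] Xw by (simp add: g_def X0)
      have step1: "K *v (X s *v w) = 0 \<and> (\<forall>a. (Y s *v w) $ Inr a = 0)" if s: "0 < s" "s < t" for s
      proof -
        define d where "d = min s (t - s)"
        have d0: "0 < d" using s by (simp add: d_def)
        have loc: "\<forall>y. \<bar>s - y\<bar> < d \<longrightarrow> g s = g y"
          using s gz by (auto simp: d_def abs_if split: if_splits)
        have "- ((X s *v w) \<bullet> (K *v (X s *v w)) + (Y s *v w) \<bullet> (Dmat *v (Y s *v w))) = 0"
          using DERIV_local_const[OF gd[of w s, folded g_def[abs_def]] d0 loc] by (simp add: g_def[abs_def])
        moreover have "0 \<le> (X s *v w) \<bullet> (K *v (X s *v w))" using Knn by (simp add: mat_nonneg_def)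
        moreover note D_quad_nonneg[of "Y s *v w"]
        ultimately have q1: "(X s *v w) \<bullet> (K *v (X s *v w)) = 0" and q2: "(Y s *v w) \<bullet> (Dmat *v (Y s *v w)) = 0"
          by linarith+
        show ?thesis using psd_zero[OF Ksym Knn q1] D_quad_zero[OF q2] by blast
      qed
      have yz: "Y s *v w = 0" if s: "0 < s" "s < t" for s
      proof -
        define d where "d = min s (t - s)"
        have d0: "0 < d" using s by (simp add: d_def)
        have Kx: "K *v (X s *v w) = 0" using step1[OF s] by blast
        have inr: "(Y s' *v w) $ Inr a = 0" if "0 < s'" "s' < t" for s' a
          using step1[OF that] by blast
        have inl: "(Y s *v w) $ Inl a = 0" for a
        proof -
          have dd: "((\<lambda>s. (Y s *v w) $ Inr a) has_real_derivative (- (K *v (X s *v w)) + transpose Cmat *v (Y s *v w)) $ Inr a) (at s)"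
            using bounded_linear.has_vector_derivative[OF bounded_linear_vec_nth yd[of w s], of "Inr a"]
            by (simp add: has_real_derivative_iff_has_vector_derivative)
          have loc2: "\<forall>y. \<bar>s - y\<bar> < d \<longrightarrow> (Y s *v w) $ Inr a = (Y y *v w) $ Inr a"
            using s inr by (auto simp: d_def abs_if split: if_splits)
          have "(- (K *v (X s *v w)) + transpose Cmat *v (Y s *v w)) $ Inr a = 0"
            by (rule DERIV_local_const[OF dd d0 loc2])
          thus ?thesis using Kx by (simp add: CT_apply del: transpose_matrix_vector)
        qed
        show ?thesis
        proof (subst vec_eq_iff, intro allI)
          fix i show "(Y s *v w) $ i = 0 $ i"
            using inl inr[OF s] by (cases i) auto
        qed
      qed
      have lim: "((\<lambda>s. Y s *v w) \<longlongrightarrow> w) (at_right 0)"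
      proof -
        have "((\<lambda>s. Y s *v w) \<longlongrightarrow> Y 0 *v w) (at 0)"
          using has_vector_derivative_continuous[OF yd[of w 0]] by (simp add: continuous_at)
        thus ?thesis by (intro tendsto_mono[OF at_le[of "{0<..}" UNIV]]) (auto simp: Y0)
      qed
      have ev: "\<forall>\<^sub>F s in at_right 0. Y s *v w = 0"
        unfolding eventually_at_right_field using t0 yz by blast
      have "((\<lambda>s. Y s *v w) \<longlongrightarrow> 0) (at_right 0)"
        using ev by (rule tendsto_eventually)
      from tendsto_unique[OF _ lim this] show "w = 0" by simp
    qed
    have "inj ((*v) (X t))"
    proof (rule injI)
      fix a b assume "X t *v a = X t *v b"
      hence "X t *v (a - b) = 0" by (simp add: matrix_vector_mult_diff_distrib)
      hence "a - b = 0" by (rule kern)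
      thus "a = b" by simp
    qed
    thus ?thesis using matrix_left_invertible_injective invertible_left_inverse by blast
  qed
  define N where "N = (\<lambda>s. Y s ** matrix_inv (X s))"
  have Nd: "(N has_vector_derivative (N t ** Cmat + transpose Cmat ** N t + N t ** Dmat ** N t - K)) (at t)"
    if t0: "0 < t" for t
  proof -
    have it: "invertible (X t)" using Xinv[OF t0] .
    have dt: "det (X t) \<noteq> 0" using it invertible_det_nz by blast
    have "(N has_vector_derivative (Y t ** (- (matrix_inv (X t) ** (- (Cmat ** X t) - Dmat ** Y t) ** matrix_inv (X t)))
       + (- (K ** X t) + transpose Cmat ** Y t) ** matrix_inv (X t))) (at t)"
      unfolding N_def by (rule bounded_bilinear.has_vector_derivative[OF bb_mm Yd vderiv_matrix_inv[OF Xd dt]])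
    moreover have "Y t ** (- (matrix_inv (X t) ** (- (Cmat ** X t) - Dmat ** Y t) ** matrix_inv (X t)))
       + (- (K ** X t) + transpose Cmat ** Y t) ** matrix_inv (X t)
       = N t ** Cmat + transpose Cmat ** N t + N t ** Dmat ** N t - K"
      unfolding N_def by (rule riccati_id[of "X t" "Y t" Cmat Dmat K, OF it])
    ultimately show ?thesis by (simp only:)
  qed
  have Ycont: "(Y \<longlongrightarrow> mat 1) (at_right 0)"
  proof -
    have "(Y \<longlongrightarrow> Y 0) (at 0)"
      using has_vector_derivative_continuous[OF Yd[of 0]] by (simp add: continuous_at)
    thus ?thesis by (intro tendsto_mono[OF at_le[of "{0<..}" UNIV]]) (auto simp: Y0)
  qed
  have Xcont: "(X \<longlongrightarrow> 0) (at_right 0)"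
  proof -
    have "(X \<longlongrightarrow> X 0) (at 0)"
      using has_vector_derivative_continuous[OF Xd[of 0]] by (simp add: continuous_at)
    thus ?thesis by (intro tendsto_mono[OF at_le[of "{0<..}" UNIV]]) (auto simp: X0)
  qed
  have evY: "\<forall>\<^sub>F s in at_right 0. det (Y s) \<noteq> 0"
    using tendsto_imp_eventually_ne[OF tendsto_det[OF Ycont]] by simp
  have evgood: "\<forall>\<^sub>F s in at_right 0. invertible (Y s) \<and> invertible (X s)"
    using evY eventually_at_right_less[of "0::real"]
    by eventually_elim (metis Xinv invertible_det_nz)
  have ev1: "\<forall>\<^sub>F s in at_right 0. invertible (N s)"
    using evgood by eventually_elim (auto simp: N_def intro!: invertible_mult invertible_matrix_inv)
  have ev2: "\<forall>\<^sub>F s in at_right 0. X s ** matrix_inv (Y s) = matrix_inv (N s)"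
    using evgood
  proof eventually_elim
    case (elim s)
    hence iy: "invertible (Y s)" and ix: "invertible (X s)" by auto
    have "N s ** (X s ** matrix_inv (Y s)) = Y s ** (matrix_inv (X s) ** X s) ** matrix_inv (Y s)"
      by (simp add: N_def matrix_mul_assoc)
    also have "\<dots> = mat 1" by (simp add: matrix_inv_props[OF ix] matrix_inv_props[OF iy])
    finally show ?case by (rule matrix_inv_unique[symmetric])
  qed
  have lim: "((\<lambda>s. X s ** matrix_inv (Y s)) \<longlongrightarrow> 0 ** matrix_inv (mat 1)) (at_right 0)"
    by (intro bounded_bilinear.tendsto[OF bb_mm] Xcont tendsto_matrix_inv[OF Ycont]) simp
  have limN: "((\<lambda>t. matrix_inv (N t)) \<longlongrightarrow> 0) (at_right 0)"
    using Lim_transform_eventually[OF lim ev2] by simp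
  have Nsym: "u \<bullet> (N t *v p) = (N t *v u) \<bullet> p" if t0: "0 < t" for t u p
  proof -
    have it: "invertible (X t)" using Xinv[OF t0] .
    have "(Y t *v (matrix_inv (X t) *v u)) \<bullet> (X t *v (matrix_inv (X t) *v p)) =
      (X t *v (matrix_inv (X t) *v u)) \<bullet> (Y t *v (matrix_inv (X t) *v p))" by (rule F1)
    thus ?thesis by (simp add: N_def inv_apply[OF it] matrix_vector_mul_assoc[symmetric])
  qed
  have Nnp: "mat_nonpos (N t)" if t0: "0 < t" for t
    unfolding mat_nonpos_def
  proof
    fix u
    have it: "invertible (X t)" using Xinv[OF t0] .
    have "(X t *v (matrix_inv (X t) *v u)) \<bullet> (Y t *v (matrix_inv (X t) *v u)) \<le> 0"
      using t0 by (intro gnonpos) simp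
    thus "u \<bullet> (N t *v u) \<le> 0" by (simp add: N_def inv_apply[OF it] matrix_vector_mul_assoc[symmetric])
  qed
  have Nnn: "mat_nonneg (vector_derivative N (at t))" if t0: "0 < t" for t
    unfolding vector_derivative_at[OF Nd[OF t0]] mat_nonneg_def
  proof
    fix u
    have it: "invertible (X t)" using Xinv[OF t0] .
    define v where "v = matrix_inv (X t) *v u"
    have xv: "X t *v v = u" by (simp add: v_def inv_apply[OF it])
    have yv: "Y t *v v = N t *v u" by (simp add: v_def N_def matrix_vector_mul_assoc[symmetric])
    have "u \<bullet> ((N t ** Cmat + transpose Cmat ** N t + N t ** Dmat ** N t - K) *v u)
      = u \<bullet> (N t *v (Cmat *v u)) + u \<bullet> (transpose Cmat *v (N t *v u)) + u \<bullet> (N t *v (Dmat *v (N t *v u))) - u \<bullet> (K *v u)"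
      by (simp add: matrix_vector_mul_assoc[symmetric] matrix_vector_mult_add_rdistrib
          matrix_vector_mult_diff_rdistrib inner_add_right inner_diff_right del: transpose_matrix_vector)
    also have "\<dots> = - (u \<bullet> (K *v u)) + 2 * ((Cmat *v u) \<bullet> (N t *v u)) + (N t *v u) \<bullet> (Dmat *v (N t *v u))"
    proof -
      have a1: "u \<bullet> (N t *v (Cmat *v u)) = (Cmat *v u) \<bullet> (N t *v u)"
        using Nsym[OF t0, of u "Cmat *v u"] inner_commute by metis
      have a2: "u \<bullet> (transpose Cmat *v (N t *v u)) = (Cmat *v u) \<bullet> (N t *v u)" by (rule transpose_inner2)
      have a3: "u \<bullet> (N t *v (Dmat *v (N t *v u))) = (N t *v u) \<bullet> (Dmat *v (N t *v u))" by (rule Nsym[OF t0])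
      show ?thesis unfolding a1 a2 a3 by linarith
    qed
    also have "\<dots> = v \<bullet> (Dmat *v v)"
      using F2[of t v] by (simp add: xv yv)
    also have "\<dots> \<ge> 0" by (rule D_quad_nonneg)
    finally show "0 \<le> u \<bullet> ((N t ** Cmat + transpose Cmat ** N t + N t ** Dmat ** N t - K) *v u)" .
  qed
  show ?thesis
    using Nd ev1 limN Nnp Nnn by blast
qed
end
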